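(* Let $d\ge1$ and let $\mu=\prod_{i=1}^d\mu_i$ be a product probability measure on $\mathbb{R}^d$, where for each $i$, $\mathrm{d}\mu_i(x_i)=\rho_i(|x_i|)\,\mathrm{d}x_i$ is a probability measure on $\mathbb{R}$ with $\rho_i:[0,\infty)\to(0,\infty)$ continuous. Let $A\subset\mathbb{R}^d$ be a bounded closed convex set such that whenever $x\in A$, the orthogonal projection of $x$ onto each coordinate hyperplane $\{x_i=0\}$ (i.e. the point obtained from $x$ by replacing its $i$-th coordinate with $0$), $i=1,\dots,d$, also belongs to $A$. Then for all positive constants $a_1,\dots,a_d$ and the ellipsoid $$B=\Big\{x\in\mathbb{R}^d:\ \tfrac{x_1^2}{a_1^2}+\cdots+\tfrac{x_d^2}{a_d^2}\le 1\Big\},$$ we have $\mu(A\cap B)\ge\mu(A)\,\mu(B)$. *)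

theory Defs
  imports "HOL-Analysis.Analysis"
begin

text \<open>The product measure on R^d (index type 'n, d = CARD('n)) whose i-th factor
  has Lebesgue density t \<mapsto> rho i |t|. Since lborel on real^'n is the product of the
  one-dimensional Lebesgue measures, this is the product of the factor measures.\<close>
definition prod_radial_measure :: "('n::finite \<Rightarrow> real \<Rightarrow> real) \<Rightarrow> (real ^ 'n) measure" where
  "prod_radial_measure rho = density lborel (\<lambda>x. ennreal (\<Prod>i\<in>UNIV. rho i \<bar>x $ i\<bar>))"

end

theory Submission imports Defs "HOL-Probability.Probability" begin

lemma sym_int:
  fixes m :: "real measure" and h :: "real \<Rightarrow> real"
  assumes S: "sets m = sets borel" and sym: "distr m borel uminus = m"
    and hm: "h \<in> borel_measurable m"
  shows "integral\<^sup>L m (\<lambda>t. h (-t)) = integral\<^sup>L m h"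
proof -
  have mc: "measurable m borel = measurable borel borel" by (rule measurable_cong_sets[OF S refl])
  have hb: "h \<in> borel_measurable borel" using hm unfolding mc .
  have um: "uminus \<in> measurable m borel" unfolding mc by (rule borel_measurable_uminus[OF measurable_ident_sets]) simp
  have "integral\<^sup>L m (\<lambda>t. h (-t)) = integral\<^sup>L (distr m borel uminus) h"
    by (rule integral_distr[symmetric]) (use um hb in auto)
  also have "\<dots> = integral\<^sup>L m h" by (subst sym) (rule refl)
  finally show ?thesis .
qed

lemma pair_ineq:
  fixes f g :: "real \<Rightarrow> real"
  assumes fsd: "\<And>t l. 0\<le>l \<Longrightarrow> l\<le>1 \<Longrightarrow> f t \<le> f (l*t)"
    and gsd: "\<And>t l. 0\<le>l \<Longrightarrow> l\<le>1 \<Longrightarrow> g t \<le> g (l*t)"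
    and gev: "\<And>t. g (-t) = g t"
    and st: "\<bar>s\<bar> \<le> \<bar>t\<bar>"
  shows "f t + f (-t) \<le> f s + f (-s) \<and> g t \<le> g s"
proof (cases "t = 0")
  case True then show ?thesis using st by simp
next
  case False
  define l where "l = \<bar>s\<bar> / \<bar>t\<bar>"
  have l0: "0 \<le> l" and l1: "l \<le> 1" using st False by (auto simp: l_def)
  have h1: "f t \<le> f (l*t)" "f (-t) \<le> f (l*(-t))" using fsd[OF l0 l1, of t] fsd[OF l0 l1, of "-t"] by auto
  have "s = l*t \<or> s = -(l*t)"
  proof (cases "t > 0")
    case True
    then have "l*t = \<bar>s\<bar>" by (simp add: l_def)
    then show ?thesis by (cases "s \<ge> 0") auto
  next
    case False
    then have "t < 0" using \<open>t \<noteq> 0\<close> by simp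
    then have "l*t = - \<bar>s\<bar>" by (simp add: l_def)
    then show ?thesis by (cases "s \<ge> 0") auto
  qed
  then have "f s + f (-s) = f (l*t) + f (l*(-t))" by auto
  moreover have "g t \<le> g s"
  proof -
    have "g t \<le> g (l*t)" using gsd l0 l1 by auto
    moreover have "g s = g (l*t)" using \<open>s = l*t \<or> s = -(l*t)\<close> gev[of "l*t"] by auto
    ultimately show ?thesis by simp
  qed
  ultimately show ?thesis using h1 by (intro conjI; linarith)
qed

lemma cheb1:
  fixes m :: "real measure" and f g :: "real \<Rightarrow> real"
  assumes P: "prob_space m" and S: "sets m = sets borel" and sym: "distr m borel uminus = m"
    and fm: "f \<in> borel_measurable m" and gm: "g \<in> borel_measurable m"
    and f01: "\<And>t. 0 \<le> f t \<and> f t \<le> 1" and g01: "\<And>t. 0 \<le> g t \<and> g t \<le> 1"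
    and fsd: "\<And>t l. 0\<le>l \<Longrightarrow> l\<le>1 \<Longrightarrow> f t \<le> f (l*t)"
    and gsd: "\<And>t l. 0\<le>l \<Longrightarrow> l\<le>1 \<Longrightarrow> g t \<le> g (l*t)"
    and gev: "\<And>t. g (-t) = g t"
  shows "integral\<^sup>L m f * integral\<^sup>L m g \<le> integral\<^sup>L m (\<lambda>t. f t * g t)"
proof -
  interpret prob_space m by (rule P)
  have mc: "measurable m m = measurable borel borel" by (rule measurable_cong_sets[OF S S])
  have um: "uminus \<in> measurable m m" unfolding mc by (rule borel_measurable_uminus[OF measurable_ident_sets]) simp
  define p where "p t = (f t + f (-t)) / 2" for t
  have fm': "(\<lambda>t. f (-t)) \<in> borel_measurable m" using measurable_comp[OF um fm] by (simp add: comp_def)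
  have pm: "p \<in> borel_measurable m" unfolding p_def by (intro borel_measurable_divide borel_measurable_add fm fm' measurable_const) simp
  have p01: "0 \<le> p t \<and> p t \<le> 1" for t using f01[of t] f01[of "-t"] by (simp add: p_def)
  have int: "integrable m h" if "h \<in> borel_measurable m" "\<And>t. \<bar>h t\<bar> \<le> 1" for h :: "real \<Rightarrow> real"
    using that by (intro finite_measure.integrable_const_bound[where B=1] finite_measure_axioms) auto
  have fi: "integrable m f" using f01 fm by (intro int) (auto simp: abs_le_iff)
  have fi': "integrable m (\<lambda>t. f (-t))" using f01 fm' by (intro int) (auto simp: abs_le_iff)
  have gi: "integrable m g" using g01 gm by (intro int) (auto simp: abs_le_iff)
  have pi: "integrable m p" using p01 pm by (intro int) (auto simp: abs_le_iff)
  have pgm: "(\<lambda>t. p t * g t) \<in> borel_measurable m" by (intro borel_measurable_times pm gm)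
  have pgi: "integrable m (\<lambda>t. p t * g t)"
    using p01 g01 pgm by (intro int) (auto simp: abs_le_iff mult_le_one)
  have Ep: "integral\<^sup>L m p = integral\<^sup>L m f"
  proof -
    have "integral\<^sup>L m p = (integral\<^sup>L m f + integral\<^sup>L m (\<lambda>t. f (-t))) / 2"
      unfolding p_def using fi fi' by simp
    also have "integral\<^sup>L m (\<lambda>t. f (-t)) = integral\<^sup>L m f" by (rule sym_int[OF S sym fm])
    finally show ?thesis by simp
  qed
  have Epg: "integral\<^sup>L m (\<lambda>t. p t * g t) = integral\<^sup>L m (\<lambda>t. f t * g t)"
  proof -
    have fgm: "(\<lambda>t. f t * g t) \<in> borel_measurable m" by (intro borel_measurable_times fm gm)
    have fgm': "(\<lambda>t. f (-t) * g t) \<in> borel_measurable m" by (intro borel_measurable_times fm' gm)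
    have fgi: "integrable m (\<lambda>t. f t * g t)"
      using f01 g01 fgm by (intro int) (auto simp: abs_le_iff mult_le_one)
    have fgi': "integrable m (\<lambda>t. f (-t) * g t)"
      using f01 g01 fgm' by (intro int) (auto simp: abs_le_iff mult_le_one)
    have "(\<lambda>t. p t * g t) = (\<lambda>t. (f t * g t + f (-t) * g t) / 2)"
      by (auto simp: p_def field_simps)
    then have "integral\<^sup>L m (\<lambda>t. p t * g t) = (integral\<^sup>L m (\<lambda>t. f t * g t) + integral\<^sup>L m (\<lambda>t. f (-t) * g t)) / 2"
      using fgi fgi' by simp
    also have "integral\<^sup>L m (\<lambda>t. f (-t) * g t) = integral\<^sup>L m (\<lambda>t. f (-t) * g (-t))"
      using gev by simp
    also have "\<dots> = integral\<^sup>L m (\<lambda>t. f t * g t)" by (rule sym_int[OF S sym fgm])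
    finally show ?thesis by simp
  qed
  have pw: "0 \<le> (p s - p t) * (g s - g t)" for s t
  proof (cases "\<bar>s\<bar> \<le> \<bar>t\<bar>")
    case True
    from pair_ineq[OF fsd gsd gev True] have "p t \<le> p s" "g t \<le> g s" by (auto simp: p_def)
    then show ?thesis by (intro mult_nonneg_nonneg) auto
  next
    case False
    then have "\<bar>t\<bar> \<le> \<bar>s\<bar>" by simp
    from pair_ineq[OF fsd gsd gev this] have "p s \<le> p t" "g s \<le> g t" by (auto simp: p_def)
    then show ?thesis by (intro mult_nonpos_nonpos) auto
  qed
  define Eg where "Eg = integral\<^sup>L m g"
  define Ep' where "Ep' = integral\<^sup>L m p"
  define Epg' where "Epg' = integral\<^sup>L m (\<lambda>t. p t * g t)"
  have inner: "integral\<^sup>L m (\<lambda>t. (p s - p t) * (g s - g t)) = p s * g s - p s * Eg - g s * Ep' + Epg'" for s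
  proof -
    have "(\<lambda>t. (p s - p t) * (g s - g t)) = (\<lambda>t. p s * g s - p s * g t - g s * p t + p t * g t)"
      by (auto simp: algebra_simps)
    then show ?thesis using gi pi pgi by (simp add: Eg_def Ep'_def Epg'_def prob_space)
  qed
  have "0 \<le> integral\<^sup>L m (\<lambda>s. integral\<^sup>L m (\<lambda>t. (p s - p t) * (g s - g t)))"
    by (rule integral_nonneg_AE, rule AE_I2, rule integral_nonneg_AE, rule AE_I2, rule pw)
  also have "\<dots> = integral\<^sup>L m (\<lambda>s. p s * g s - p s * Eg - g s * Ep' + Epg')"
    using inner by simp
  also have "\<dots> = 2 * Epg' - 2 * Ep' * Eg"
    using gi pi pgi by (simp add: Eg_def Ep'_def Epg'_def prob_space)
  finally have "Ep' * Eg \<le> Epg'" by simp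
  then show ?thesis using Ep Epg by (simp add: Eg_def Ep'_def Epg'_def)
qed


lemma bound01:
  fixes N :: "'a measure" and h :: "'a \<Rightarrow> real"
  assumes "prob_space N" "h \<in> borel_measurable N" "\<And>x. x \<in> space N \<Longrightarrow> 0 \<le> h x \<and> h x \<le> 1"
  shows "integrable N h" "0 \<le> integral\<^sup>L N h" "integral\<^sup>L N h \<le> 1"
proof -
  interpret prob_space N by fact
  show hi: "integrable N h"
    using assms(2,3) by (intro finite_measure.integrable_const_bound[where B=1] finite_measure_axioms) auto
  show "0 \<le> integral\<^sup>L N h" using assms(3) by (intro integral_nonneg_AE AE_I2) auto
  have "integral\<^sup>L N h \<le> integral\<^sup>L N (\<lambda>_. 1)"
    using assms(3) hi by (intro integral_mono) auto
  then show "integral\<^sup>L N h \<le> 1" by (simp add: prob_space)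
qed

lemma harris:
  fixes M :: "'i \<Rightarrow> real measure" and I :: "'i set" and F G :: "('i \<Rightarrow> real) \<Rightarrow> real"
  assumes P: "\<And>i. prob_space (M i)" and S: "\<And>i. sets (M i) = sets borel"
    and sym: "\<And>i. distr (M i) borel uminus = M i"
  shows "finite I \<Longrightarrow> F \<in> borel_measurable (PiM I M) \<Longrightarrow> G \<in> borel_measurable (PiM I M)
    \<Longrightarrow> (\<And>x. x \<in> space (PiM I M) \<Longrightarrow> 0 \<le> F x \<and> F x \<le> 1)
    \<Longrightarrow> (\<And>x. x \<in> space (PiM I M) \<Longrightarrow> 0 \<le> G x \<and> G x \<le> 1)
    \<Longrightarrow> (\<And>x i l. x \<in> space (PiM I M) \<Longrightarrow> i \<in> I \<Longrightarrow> 0 \<le> l \<Longrightarrow> l \<le> 1 \<Longrightarrow> F x \<le> F (x(i := l * x i)))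
    \<Longrightarrow> (\<And>x i l. x \<in> space (PiM I M) \<Longrightarrow> i \<in> I \<Longrightarrow> 0 \<le> l \<Longrightarrow> l \<le> 1 \<Longrightarrow> G x \<le> G (x(i := l * x i)))
    \<Longrightarrow> (\<And>x i. x \<in> space (PiM I M) \<Longrightarrow> i \<in> I \<Longrightarrow> G (x(i := - x i)) = G x)
    \<Longrightarrow> integral\<^sup>L (PiM I M) F * integral\<^sup>L (PiM I M) G \<le> integral\<^sup>L (PiM I M) (\<lambda>x. F x * G x)"
proof (induction I arbitrary: F G rule: finite_induct)
  case empty
  show ?case by (simp add: PiM_empty lebesgue_integral_count_space_finite)
next
  case (insert i I F G)
  interpret product_sigma_finite M
    using P by (simp add: product_sigma_finite_def prob_space_imp_sigma_finite)
  have spM: "space (M j) = UNIV" for j using sets_eq_imp_space_eq[OF S[of j]] by simp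
  have sp: "space (PiM J M) = PiE J (\<lambda>_. UNIV)" for J by (simp add: space_PiM spM)
  have PI: "prob_space (PiM J M)" for J by (rule prob_space_PiM) (rule P)
  note Fm = insert.prems(1) and Gm = insert.prems(2)
  have upd_sp: "x(i := t) \<in> space (PiM (insert i I) M)" if "x \<in> space (PiM I M)" for x t
    using that by (auto simp: sp PiE_def extensional_def)
  have upd_sp2: "x(j := t) \<in> space (PiM J M)" if "x \<in> space (PiM J M)" "j \<in> J" for x t j J
    using that by (auto simp: sp PiE_def extensional_def)
  have sec: "(\<lambda>t. H (x(i := t))) \<in> borel_measurable (M i)"
    if "H \<in> borel_measurable (PiM (insert i I) M)" "x \<in> space (PiM I M)" for H :: "_ \<Rightarrow> real" and x
    using measurable_comp[OF measurable_component_update[OF that(2) insert.hyps(2)] that(1)]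
    by (simp add: comp_def)
  have joint: "(\<lambda>x. \<integral>t. H (x(i := t)) \<partial>M i) \<in> borel_measurable (PiM I M)"
    if "H \<in> borel_measurable (PiM (insert i I) M)" for H :: "_ \<Rightarrow> real"
  proof -
    have "case_prod (\<lambda>x t. H (x(i := t))) \<in> borel_measurable (PiM I M \<Otimes>\<^sub>M M i)"
      using measurable_comp[OF measurable_add_dim that] by (simp add: comp_def case_prod_beta')
    then show ?thesis by (rule sigma_finite_measure.borel_measurable_lebesgue_integral[OF sigma_finite_measures])
  qed
  have ins: "integral\<^sup>L (PiM (insert i I) M) H = (\<integral>x. (\<integral>t. H (x(i := t)) \<partial>M i) \<partial>PiM I M)"
    if "H \<in> borel_measurable (PiM (insert i I) M)" "\<And>x. x \<in> space (PiM (insert i I) M) \<Longrightarrow> 0 \<le> H x \<and> H x \<le> 1" for H :: "_ \<Rightarrow> real"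
    by (rule product_integral_insert[OF insert.hyps(1,2) bound01(1)[OF PI that]])
  have sec01: "integrable (M i) (\<lambda>t. H (x(i:=t))) \<and> 0 \<le> (\<integral>t. H (x(i:=t)) \<partial>M i) \<and> (\<integral>t. H (x(i:=t)) \<partial>M i) \<le> 1"
    if "H \<in> borel_measurable (PiM (insert i I) M)" "\<And>y. y \<in> space (PiM (insert i I) M) \<Longrightarrow> 0 \<le> H y \<and> H y \<le> 1"
      "x \<in> space (PiM I M)" for H :: "_ \<Rightarrow> real" and x
  proof -
    have "\<And>t. t \<in> space (M i) \<Longrightarrow> 0 \<le> H (x(i:=t)) \<and> H (x(i:=t)) \<le> 1"
      using that(2)[OF upd_sp[OF that(3)]] by blast
    from bound01[OF P sec[OF that(1,3)] this] show ?thesis by blast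
  qed
  define F' where "F' x = (\<integral>t. F (x(i := t)) \<partial>M i)" for x
  define G' where "G' x = (\<integral>t. G (x(i := t)) \<partial>M i)" for x
  have F'm: "F' \<in> borel_measurable (PiM I M)" unfolding F'_def by (rule joint[OF Fm])
  have G'm: "G' \<in> borel_measurable (PiM I M)" unfolding G'_def by (rule joint[OF Gm])
  have FGm: "(\<lambda>x. F x * G x) \<in> borel_measurable (PiM (insert i I) M)"
    by (intro borel_measurable_times Fm Gm)
  have FG01: "0 \<le> F x * G x \<and> F x * G x \<le> 1" if "x \<in> space (PiM (insert i I) M)" for x
    using insert.prems(3)[OF that] insert.prems(4)[OF that] by (auto intro: mult_le_one)
  have secF: "(\<lambda>t. F (x(i := t))) \<in> borel_measurable (M i)" if "x \<in> space (PiM I M)" for x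
    by (rule sec[OF Fm that])
  have secG: "(\<lambda>t. G (x(i := t))) \<in> borel_measurable (M i)" if "x \<in> space (PiM I M)" for x
    by (rule sec[OF Gm that])
  have F'01: "0 \<le> F' x \<and> F' x \<le> 1" if "x \<in> space (PiM I M)" for x
    unfolding F'_def using sec01[OF Fm insert.prems(3) that] by blast
  have G'01: "0 \<le> G' x \<and> G' x \<le> 1" if "x \<in> space (PiM I M)" for x
    unfolding G'_def using sec01[OF Gm insert.prems(4) that] by blast
  have IH: "integral\<^sup>L (PiM I M) F' * integral\<^sup>L (PiM I M) G' \<le> integral\<^sup>L (PiM I M) (\<lambda>x. F' x * G' x)"
  proof (rule insert.IH[OF F'm G'm F'01 G'01])
    fix x j and l :: real assume x: "x \<in> space (PiM I M)" and j: "j \<in> I" and l: "0 \<le> l" "l \<le> 1"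
    have ji: "j \<noteq> i" using j insert.hyps(2) by auto
    have x': "x(j := l * x j) \<in> space (PiM I M)" by (rule upd_sp2[OF x j])
    show "F' x \<le> F' (x(j := l * x j))" unfolding F'_def
    proof (rule integral_mono)
      show "integrable (M i) (\<lambda>t. F (x(i := t)))"
        using sec01[OF Fm insert.prems(3) x] by blast
      show "integrable (M i) (\<lambda>t. F ((x(j := l * x j))(i := t)))"
        using sec01[OF Fm insert.prems(3) x'] by blast
      fix t
      have "F (x(i := t)) \<le> F ((x(i := t))(j := l * (x(i := t)) j))"
        by (rule insert.prems(5)[OF upd_sp[OF x]]) (use j l in auto)
      also have "(x(i := t))(j := l * (x(i := t)) j) = (x(j := l * x j))(i := t)"
        using ji by (auto simp: fun_eq_iff)
      finally show "F (x(i := t)) \<le> F ((x(j := l * x j))(i := t))" .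
    qed
    show "G' x \<le> G' (x(j := l * x j))" unfolding G'_def
    proof (rule integral_mono)
      show "integrable (M i) (\<lambda>t. G (x(i := t)))"
        using sec01[OF Gm insert.prems(4) x] by blast
      show "integrable (M i) (\<lambda>t. G ((x(j := l * x j))(i := t)))"
        using sec01[OF Gm insert.prems(4) x'] by blast
      fix t
      have "G (x(i := t)) \<le> G ((x(i := t))(j := l * (x(i := t)) j))"
        by (rule insert.prems(6)[OF upd_sp[OF x]]) (use j l in auto)
      also have "(x(i := t))(j := l * (x(i := t)) j) = (x(j := l * x j))(i := t)"
        using ji by (auto simp: fun_eq_iff)
      finally show "G (x(i := t)) \<le> G ((x(j := l * x j))(i := t))" .
    qed
  next
    fix x j assume x: "x \<in> space (PiM I M)" and j: "j \<in> I"
    have ji: "j \<noteq> i" using j insert.hyps(2) by auto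
    show "G' (x(j := - x j)) = G' x" unfolding G'_def
    proof (rule Bochner_Integration.integral_cong[OF refl])
      fix t
      have "G ((x(i := t))(j := - (x(i := t)) j)) = G (x(i := t))"
        by (rule insert.prems(7)[OF upd_sp[OF x]]) (use j in auto)
      moreover have "(x(i := t))(j := - (x(i := t)) j) = (x(j := - x j))(i := t)"
        using ji by (auto simp: fun_eq_iff)
      ultimately show "G ((x(j := - x j))(i := t)) = G (x(i := t))" by simp
    qed
  qed
  have step: "F' x * G' x \<le> (\<integral>t. F (x(i := t)) * G (x(i := t)) \<partial>M i)" if x: "x \<in> space (PiM I M)" for x
    unfolding F'_def G'_def
  proof (rule cheb1[OF P S sym secF[OF x] secG[OF x]])
    fix t
    show "0 \<le> F (x(i := t)) \<and> F (x(i := t)) \<le> 1" by (rule insert.prems(3)[OF upd_sp[OF x]])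
    show "0 \<le> G (x(i := t)) \<and> G (x(i := t)) \<le> 1" by (rule insert.prems(4)[OF upd_sp[OF x]])
    fix l :: real assume l: "0 \<le> l" "l \<le> 1"
    show "F (x(i := t)) \<le> F (x(i := l * t))"
    proof -
      have "F (x(i:=t)) \<le> F ((x(i:=t))(i := l * (x(i:=t)) i))"
        by (rule insert.prems(5)[OF upd_sp[OF x]]) (use l in auto)
      then show ?thesis by simp
    qed
    show "G (x(i := t)) \<le> G (x(i := l * t))"
    proof -
      have "G (x(i:=t)) \<le> G ((x(i:=t))(i := l * (x(i:=t)) i))"
        by (rule insert.prems(6)[OF upd_sp[OF x]]) (use l in auto)
      then show ?thesis by simp
    qed
  next
    fix t
    show "G (x(i := - t)) = G (x(i := t))"
    proof -
      have "G ((x(i:=t))(i := - (x(i:=t)) i)) = G (x(i:=t))"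
        by (rule insert.prems(7)[OF upd_sp[OF x, of t] insertI1])
      then show ?thesis by simp
    qed
  qed
  have FGsec: "(\<lambda>x. \<integral>t. F (x(i := t)) * G (x(i := t)) \<partial>M i) \<in> borel_measurable (PiM I M)"
    using joint[OF FGm] by simp
  have F'G'm: "(\<lambda>x. F' x * G' x) \<in> borel_measurable (PiM I M)" by (intro borel_measurable_times F'm G'm)
  have "integral\<^sup>L (PiM (insert i I) M) F * integral\<^sup>L (PiM (insert i I) M) G
      = integral\<^sup>L (PiM I M) F' * integral\<^sup>L (PiM I M) G'"
    unfolding F'_def G'_def by (simp only: ins[OF Fm insert.prems(3)] ins[OF Gm insert.prems(4)])
  also have "\<dots> \<le> integral\<^sup>L (PiM I M) (\<lambda>x. F' x * G' x)" by (rule IH)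
  also have "\<dots> \<le> (\<integral>x. (\<integral>t. F (x(i := t)) * G (x(i := t)) \<partial>M i) \<partial>PiM I M)"
  proof (rule integral_mono)
    show "integrable (PiM I M) (\<lambda>x. F' x * G' x)"
      using F'01 G'01 by (intro bound01(1)[OF PI F'G'm]) (auto intro: mult_le_one)
    show "integrable (PiM I M) (\<lambda>x. \<integral>t. F (x(i := t)) * G (x(i := t)) \<partial>M i)"
    proof (rule bound01(1)[OF PI FGsec])
      fix x assume x: "x \<in> space (PiM I M)"
      have m: "(\<lambda>t. F (x(i := t)) * G (x(i := t))) \<in> borel_measurable (M i)"
        by (intro borel_measurable_times secF[OF x] secG[OF x])
      show "0 \<le> (\<integral>t. F (x(i := t)) * G (x(i := t)) \<partial>M i) \<and> (\<integral>t. F (x(i := t)) * G (x(i := t)) \<partial>M i) \<le> 1"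
        using sec01[OF FGm FG01 x] by blast
    qed
    fix x assume "x \<in> space (PiM I M)"
    then show "F' x * G' x \<le> (\<integral>t. F (x(i := t)) * G (x(i := t)) \<partial>M i)" by (rule step)
  qed
  also have "\<dots> = integral\<^sup>L (PiM (insert i I) M) (\<lambda>x. F x * G x)"
    by (rule ins[OF FGm FG01, symmetric])
  finally show ?case .
qed


definition Tv :: "(real^'n \<Rightarrow> real) \<Rightarrow> real^'n::finite" where
  "Tv x = (\<Sum>b\<in>Basis. x b *\<^sub>R b)"

lemma Basis_vec_range: "(Basis :: (real^'n::finite) set) = range (\<lambda>i. axis i 1)"
  by (auto simp: Basis_vec_def)

lemma Tv_nth: "Tv x $ j = x (axis j 1)"
proof -
  have "Tv x $ j = Tv x \<bullet> axis j 1" by (rule cart_eq_inner_axis)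
  also have "\<dots> = (\<Sum>b\<in>Basis. x b * (b \<bullet> axis j 1))"
    by (simp add: Tv_def inner_sum_left)
  also have "\<dots> = (\<Sum>b\<in>Basis. if b = axis j 1 then x b else 0)"
    by (intro sum.cong refl) (auto simp: inner_Basis)
  also have "\<dots> = x (axis j 1)" by simp
  finally show ?thesis .
qed

lemma Tv_measurable: "Tv \<in> measurable (PiM (Basis :: (real^'n::finite) set) (\<lambda>_. lborel)) borel"
  unfolding Tv_def by measurable

definition ix :: "real^'n::finite \<Rightarrow> 'n" where
  "ix b = (SOME i. axis i 1 = b)"

lemma ix_axis: "ix (axis i 1 :: real^'n::finite) = i"
proof -
  have "axis (ix (axis i 1 :: real^'n)) 1 = (axis i 1 :: real^'n)"
    unfolding ix_def by (rule someI[of _ i]) simp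
  then show ?thesis by (simp add: axis_eq_axis)
qed

lemma prod_Basis: "(\<Prod>i\<in>UNIV. f i (x (axis i 1))) = (\<Prod>b\<in>(Basis :: (real^'n::finite) set). f (ix b) (x b))"
proof -
  have inj: "inj (\<lambda>i::'n. axis i (1::real))" by (auto simp: inj_def axis_eq_axis)
  show ?thesis unfolding Basis_vec_range by (simp add: prod.reindex[OF inj] ix_axis)
qed


lemma indicator_PiE_prod:
  assumes "finite I" "x \<in> extensional I"
  shows "(indicator (PiE I A) x :: ennreal) = (\<Prod>i\<in>I. indicator (A i) (x i))"
proof (cases "x \<in> PiE I A")
  case True
  then show ?thesis by (auto simp: indicator_def PiE_def intro!: prod.neutral)
next
  case False
  then obtain i where "i \<in> I" "x i \<notin> A i" using assms(2) by (auto simp: PiE_def)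
  then have "(\<Prod>i\<in>I. indicator (A i) (x i) :: ennreal) = 0"
    using assms(1) by (intro prod_zero) (auto intro!: bexI[of _ i])
  then show ?thesis using False by simp
qed

lemma rho_abs_meas:
  assumes "continuous_on {0..} f"
  shows "(\<lambda>t::real. f \<bar>t\<bar>) \<in> borel_measurable borel"
proof -
  have "continuous_on UNIV (\<lambda>t::real. f \<bar>t\<bar>)"
    by (rule continuous_on_compose2[OF assms continuous_on_rabs[OF continuous_on_id]]) auto
  then show ?thesis by (rule borel_measurable_continuous_onI)
qed

lemma meas_eq:
  fixes rho :: "'n::finite \<Rightarrow> real \<Rightarrow> real"
  assumes rho_cont: "\<And>i. continuous_on {0..} (rho i)"
    and rho_pos: "\<And>i t. t \<ge> 0 \<Longrightarrow> rho i t > 0"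
    and Msf: "\<And>b. sigma_finite_measure (density lborel (\<lambda>t. ennreal (rho (ix b) \<bar>t\<bar>)))"
  shows "prod_radial_measure rho = distr (PiM (Basis :: (real^'n) set) (\<lambda>b. density lborel (\<lambda>t. ennreal (rho (ix b) \<bar>t\<bar>)))) borel Tv"
proof -
  define M where "M b = density lborel (\<lambda>t. ennreal (rho (ix b) \<bar>t\<bar>))" for b :: "real^'n"
  define L where "L = PiM (Basis :: (real^'n) set) (\<lambda>_. lborel :: real measure)"
  define h where "h x = ennreal (\<Prod>i\<in>UNIV. rho i \<bar>x $ i\<bar>)" for x :: "real^'n"
  have rm[measurable]: "(\<lambda>t::real. rho i \<bar>t\<bar>) \<in> borel_measurable borel" for i
    by (rule rho_abs_meas[OF rho_cont])
  have hm: "h \<in> borel_measurable borel" unfolding h_def by measurable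
  have TvL: "Tv \<in> measurable L borel" unfolding L_def by (rule Tv_measurable)
  have lb: "lborel = distr L borel Tv" unfolding L_def Tv_def[abs_def] by (rule lborel_eq)
  have "prod_radial_measure rho = density lborel h" unfolding prod_radial_measure_def h_def ..
  also have "\<dots> = distr (density L (\<lambda>x. h (Tv x))) borel Tv"
    by (subst lb) (rule density_distr[OF hm TvL])
  also have "density L (\<lambda>x. h (Tv x)) = PiM Basis M"
  proof -
    interpret product_sigma_finite M
      unfolding product_sigma_finite_def M_def using Msf by blast
    interpret L: product_sigma_finite "\<lambda>_::real^'n. lborel :: real measure"
      unfolding product_sigma_finite_def using sigma_finite_lborel by blast
    have sM: "sets (M b) = sets lborel" for b by (simp add: M_def)
    have sL: "sets L = sets (PiM Basis M)" unfolding L_def by (rule sets_PiM_cong) (simp_all add: sM)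
    have hTm: "(\<lambda>x. h (Tv x)) \<in> borel_measurable L" by (rule measurable_comp[OF TvL hm, unfolded comp_def])
    show ?thesis
    proof (rule PiM_eqI)
      show "finite (Basis :: (real^'n) set)" by simp
      show "sets (density L (\<lambda>x. h (Tv x))) = sets (PiM Basis M)" using sL by simp
    next
      fix A assume A: "\<And>b. b \<in> (Basis :: (real^'n) set) \<Longrightarrow> A b \<in> sets (M b)"
      have AL: "PiE Basis A \<in> sets L" unfolding L_def
        by (rule sets_PiM_I_finite) (use A sM in auto)
      have "emeasure (density L (\<lambda>x. h (Tv x))) (PiE Basis A) = (\<integral>\<^sup>+x. h (Tv x) * indicator (PiE Basis A) x \<partial>L)"
        by (rule emeasure_density[OF hTm AL])
      also have "\<dots> = (\<integral>\<^sup>+x. (\<Prod>b\<in>Basis. ennreal (rho (ix b) \<bar>x b\<bar>) * indicator (A b) (x b)) \<partial>L)"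
      proof (rule nn_integral_cong)
        fix x assume x: "x \<in> space L"
        have ext: "x \<in> extensional Basis" using x by (simp add: L_def space_PiM PiE_def)
        have "h (Tv x) = ennreal (\<Prod>b\<in>Basis. rho (ix b) \<bar>x b\<bar>)"
          unfolding h_def Tv_nth using prod_Basis[of "\<lambda>i t. rho i \<bar>t\<bar>" x] by simp
        also have "\<dots> = (\<Prod>b\<in>Basis. ennreal (rho (ix b) \<bar>x b\<bar>))"
          by (rule prod_ennreal[symmetric]) (simp add: less_imp_le rho_pos)
        finally show "h (Tv x) * indicator (PiE Basis A) x = (\<Prod>b\<in>Basis. ennreal (rho (ix b) \<bar>x b\<bar>) * indicator (A b) (x b))"
          by (simp add: indicator_PiE_prod[OF _ ext] prod.distrib)
      qed
      also have "\<dots> = (\<Prod>b\<in>Basis. \<integral>\<^sup>+t. ennreal (rho (ix b) \<bar>t\<bar>) * indicator (A b) t \<partial>lborel)"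
        unfolding L_def
        by (rule L.product_nn_integral_prod) (use A sM in auto)
      also have "\<dots> = (\<Prod>b\<in>Basis. emeasure (M b) (A b))"
        by (intro prod.cong refl, unfold M_def, rule emeasure_density[symmetric]) (use A sM in \<open>auto simp: M_def\<close>)
      finally show "emeasure (density L (\<lambda>x. h (Tv x))) (PiE Basis A) = (\<Prod>b\<in>Basis. emeasure (M b) (A b))" .
    qed
  qed
  finally show ?thesis by (simp add: M_def[abs_def])
qed


lemma sq_scale_le:
  fixes l v :: real
  assumes "0 \<le> l" "l \<le> 1"
  shows "(l * v)^2 \<le> v^2"
proof -
  have "l^2 \<le> 1" using assms by (simp add: power_le_one)
  then have "l^2 * v^2 \<le> 1 * v^2" by (intro mult_right_mono) auto
  then show ?thesis by (simp add: power_mult_distrib)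
qed

theorem theorem1p2:
  fixes rho :: "'n::finite \<Rightarrow> real \<Rightarrow> real"
    and A :: "(real ^ 'n) set"
    and a :: "'n \<Rightarrow> real"
  assumes rho_cont: "\<And>i. continuous_on {0..} (rho i)"
    and rho_pos: "\<And>i t. t \<ge> 0 \<Longrightarrow> rho i t > 0"
    and rho_prob: "\<And>i. emeasure (density lborel (\<lambda>t. ennreal (rho i \<bar>t\<bar>))) UNIV = 1"
    and A_bounded: "bounded A" and A_closed: "closed A" and A_convex: "convex A"
    and A_proj: "\<And>x i. x \<in> A \<Longrightarrow> (\<chi> j. if j = i then 0 else x $ j) \<in> A"
    and a_pos: "\<And>i. a i > 0"
  shows "measure (prod_radial_measure rho) (A \<inter> {x. (\<Sum>i\<in>UNIV. (x $ i)^2 / (a i)^2) \<le> 1})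
         \<ge> measure (prod_radial_measure rho) A
           * measure (prod_radial_measure rho) {x. (\<Sum>i\<in>UNIV. (x $ i)^2 / (a i)^2) \<le> 1}"
proof -
  define M where "M b = density lborel (\<lambda>t. ennreal (rho (ix b) \<bar>t\<bar>))" for b :: "real^'n"
  define B where "B = {x::real^'n. (\<Sum>i\<in>UNIV. (x $ i)^2 / (a i)^2) \<le> 1}"
  have rm[measurable]: "(\<lambda>t::real. rho i \<bar>t\<bar>) \<in> borel_measurable borel" for i
    by (rule rho_abs_meas[OF rho_cont])
  have sM: "sets (M b) = sets borel" for b by (simp add: M_def)
  have spM: "space (M b) = UNIV" for b by (simp add: M_def)
  have PM: "prob_space (M b)" for b
    by (rule prob_spaceI) (simp add: M_def rho_prob)
  have symM: "distr (M b) borel uminus = M b" for b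
  proof (rule measure_eqI)
    show "sets (distr (M b) borel uminus) = sets (M b)" by (simp add: sM)
    fix X assume X: "X \<in> sets (distr (M b) borel uminus)"
    then have Xb: "X \<in> sets borel" by simp
    have mc: "measurable (M b) borel = measurable borel borel" by (rule measurable_cong_sets[OF sM refl])
    have um: "uminus \<in> measurable (M b) borel" unfolding mc
      by (rule borel_measurable_uminus[OF measurable_ident_sets]) simp
    have pre: "uminus -` X \<inter> space (M b) \<in> sets lborel"
      using measurable_sets[OF um Xb] by (simp add: M_def)
    have "emeasure (distr (M b) borel uminus) X = emeasure (M b) (uminus -` X \<inter> space (M b))"
      by (rule emeasure_distr[OF um Xb])
    also have "\<dots> = (\<integral>\<^sup>+t. ennreal (rho (ix b) \<bar>t\<bar>) * indicator (uminus -` X \<inter> space (M b)) t \<partial>lborel)"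
      unfolding M_def by (rule emeasure_density) (use pre in \<open>auto simp: M_def\<close>)
    also have "\<dots> = (\<integral>\<^sup>+t. ennreal (rho (ix b) \<bar>-t\<bar>) * indicator X (-t) \<partial>lborel)"
      by (intro nn_integral_cong) (simp add: spM indicator_def)
    also have "\<dots> = (\<integral>\<^sup>+t. ennreal (rho (ix b) \<bar>t\<bar>) * indicator X t \<partial>(distr lborel borel uminus))"
      by (rule nn_integral_distr[symmetric]) (use Xb in auto)
    also have "\<dots> = (\<integral>\<^sup>+t. ennreal (rho (ix b) \<bar>t\<bar>) * indicator X t \<partial>lborel)"
      by (simp add: lborel_distr_uminus)
    also have "\<dots> = emeasure (M b) X"
      unfolding M_def by (rule emeasure_density[symmetric]) (use Xb in auto)
    finally show "emeasure (distr (M b) borel uminus) X = emeasure (M b) X" .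
  qed
  define N where "N = PiM (Basis :: (real^'n) set) M"
  have meq: "prod_radial_measure rho = distr N borel Tv"
    unfolding N_def M_def[abs_def]
  proof (rule meas_eq)
    show "continuous_on {0..} (rho i)" for i by (rule rho_cont)
    show "rho i t > 0" if "t \<ge> 0" for i t using rho_pos that .
    show "sigma_finite_measure (density lborel (\<lambda>t. ennreal (rho (ix b) \<bar>t\<bar>)))" for b
      by (rule prob_space_imp_sigma_finite, rule PM[unfolded M_def])
  qed
  have PN: "prob_space N" unfolding N_def by (rule prob_space_PiM) (rule PM)
  have spN: "space N = PiE Basis (\<lambda>_. UNIV)" unfolding N_def by (simp add: space_PiM spM)
  have sN: "sets N = sets (PiM (Basis :: (real^'n) set) (\<lambda>_. lborel :: real measure))"
    unfolding N_def by (rule sets_PiM_cong) (simp_all add: sM)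
  have TvN: "Tv \<in> measurable N borel"
    using Tv_measurable unfolding measurable_cong_sets[OF sN refl] .
  have Ab: "A \<in> sets borel" using A_closed by (rule borel_closed)
  have Bb: "B \<in> sets borel" unfolding B_def by measurable
  have mu: "measure (prod_radial_measure rho) S = integral\<^sup>L N (\<lambda>x. indicator S (Tv x))"
    if S: "S \<in> sets borel" for S :: "(real^'n) set"
  proof -
    have "integral\<^sup>L (distr N borel Tv) (indicator S) = integral\<^sup>L N (\<lambda>x. indicator S (Tv x) :: real)"
      by (rule integral_distr[OF TvN]) (use S in simp)
    moreover have "integral\<^sup>L (distr N borel Tv) (indicator S) = measure (distr N borel Tv) S"
      by simp
    ultimately show ?thesis using meq by simp
  qed
  define F where "F x = (indicator A (Tv x) :: real)" for x
  define G where "G x = (indicator B (Tv x) :: real)" for x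
  have Fm: "F \<in> borel_measurable N" unfolding F_def
    using measurable_comp[OF TvN borel_measurable_indicator[OF Ab]] by (simp add: comp_def)
  have Gm: "G \<in> borel_measurable N" unfolding G_def
    using measurable_comp[OF TvN borel_measurable_indicator[OF Bb]] by (simp add: comp_def)
  have upd_nth: "Tv (x(axis k 1 := v)) $ j = (if j = k then v else Tv x $ j)" for x k v j
    by (simp add: Tv_nth axis_eq_axis)
  have H: "integral\<^sup>L N F * integral\<^sup>L N G \<le> integral\<^sup>L N (\<lambda>x. F x * G x)"
    unfolding N_def
  proof (rule harris[OF PM sM symM])
    show "finite (Basis :: (real^'n) set)" by simp
    show "F \<in> borel_measurable (PiM Basis M)" using Fm by (simp add: N_def)
    show "G \<in> borel_measurable (PiM Basis M)" using Gm by (simp add: N_def)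
    show "0 \<le> F x \<and> F x \<le> 1" for x by (simp add: F_def indicator_def)
    show "0 \<le> G x \<and> G x \<le> 1" for x by (simp add: G_def indicator_def)
  next
    fix x b and l :: real assume b: "b \<in> (Basis :: (real^'n) set)" and l: "0 \<le> l" "l \<le> 1"
    obtain k where k: "b = axis k 1" using b unfolding Basis_vec_range by auto
    show "F x \<le> F (x(b := l * x b))"
    proof (cases "Tv x \<in> A")
      case True
      define y where "y = Tv x"
      define q where "q = (\<chi> j. if j = k then 0 else y $ j)"
      have q: "q \<in> A" unfolding q_def using A_proj True by (simp add: y_def)
      have "Tv (x(b := l * x b)) = l *\<^sub>R y + (1 - l) *\<^sub>R q"
      proof (rule vec_eq_iff[THEN iffD2], intro allI)
        fix j
        show "Tv (x(b := l * x b)) $ j = (l *\<^sub>R y + (1 - l) *\<^sub>R q) $ j"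
          unfolding k upd_nth by (simp add: q_def y_def Tv_nth algebra_simps)
      qed
      moreover have "l *\<^sub>R y + (1 - l) *\<^sub>R q \<in> A"
        using convexD[OF A_convex, of y q l "1 - l"] True q l by (simp add: y_def)
      ultimately show ?thesis using True by (simp add: F_def)
    next
      case False
      then show ?thesis by (simp add: F_def)
    qed
    show "G x \<le> G (x(b := l * x b))"
    proof (cases "Tv x \<in> B")
      case True
      have "(\<Sum>i\<in>UNIV. (Tv (x(b := l * x b)) $ i)^2 / (a i)^2) \<le> (\<Sum>i\<in>UNIV. (Tv x $ i)^2 / (a i)^2)"
      proof (rule sum_mono)
        fix i
        have "(Tv (x(b := l * x b)) $ i)^2 \<le> (Tv x $ i)^2"
          using sq_scale_le[OF l, of "Tv x $ k"] by (simp add: k upd_nth Tv_nth)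
        then show "(Tv (x(b := l * x b)) $ i)^2 / (a i)^2 \<le> (Tv x $ i)^2 / (a i)^2"
          by (rule divide_right_mono) simp
      qed
      then have "Tv (x(b := l * x b)) \<in> B" using True by (simp add: B_def)
      then show ?thesis using True by (simp add: G_def)
    next
      case False
      then show ?thesis by (simp add: G_def indicator_def)
    qed
  next
    fix x b assume b: "b \<in> (Basis :: (real^'n) set)"
    obtain k where k: "b = axis k 1" using b unfolding Basis_vec_range by auto
    have "(\<Sum>i\<in>UNIV. (Tv (x(b := - x b)) $ i)^2 / (a i)^2) = (\<Sum>i\<in>UNIV. (Tv x $ i)^2 / (a i)^2)"
      by (intro sum.cong refl) (simp add: k upd_nth Tv_nth)
    then show "G (x(b := - x b)) = G x" by (simp add: G_def B_def indicator_def)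
  qed
  have "measure (prod_radial_measure rho) (A \<inter> B) = integral\<^sup>L N (\<lambda>x. F x * G x)"
    by (subst mu) (use Ab Bb in \<open>auto simp: F_def G_def indicator_inter_arith\<close>)
  moreover have "measure (prod_radial_measure rho) A = integral\<^sup>L N F"
    by (subst mu[OF Ab]) (simp add: F_def[abs_def])
  moreover have "measure (prod_radial_measure rho) B = integral\<^sup>L N G"
    by (subst mu[OF Bb]) (simp add: G_def[abs_def])
  ultimately show ?thesis using H by (simp add: B_def)
qed

end
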